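(* Let $V$ be a finite vertex set with $|V| = n$ and let $\{k_u\}_{u\in V}$ be a degree sequence with $k_u \ge 1$ for all $u$. Then the graph of loopy-multigraphs $\mathcal{G}_{lm}(\{k_u\})$ is connected: for any two loopy-multigraphs $G, G'$ on $V$ with degree sequence $\{k_u\}$, there is a finite sequence of double edge swaps transforming $G$ into $G'$ such that every intermediate graph is also a loopy-multigraph on $V$ with degree sequence $\{k_u\}$.
   Context: All graphs are on a fixed labeled vertex set $V$; a graph is a multiset $E$ of unordered pairs $(u,v)$ with $u,v\in V$, where a pair $(u,u)$ is a self-loop and an edge occurring more than once is a multiedge (or multiple self-loop, if it is a loop). The degree $k_u$ of $u$ is the number of edge-endpoints at $u$, so each self-loop at $u$ contributes $2$ to $k_u$. A loopy-multigraph is such a graph in which each self-loop occurs at most once (no multiple self-loops) but non-loop edges may have any multiplicity. A double edge swap $(u,v),(x,y)\leadsto(u,x),(v,y)$ on a graph removes one copy of each of two edge occurrences $(u,v)$ and $(x,y)$ (loops allowed, i.e. possibly $u=v$ or $x=y$) and adds the edges $(u,x)$ and $(v,y)$; since edges are unordered, either pairing of endpoints may be used. It preserves the degree sequence. The graph of loopy-multigraphs $\mathcal{G}_{lm}(\{k_u\})$ has as vertices all loopy-multigraphs on $V$ with degree sequence $\{k_u\}$, with two distinct such graphs adjacent if one is obtained from the other by a single double edge swap. *)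

theory Defs
  imports Main "HOL-Library.Multiset"
begin

text \<open>An edge is an unordered pair, represented as a multiset of size 2:
  the edge (u,v) is the multiset containing u and v; a self-loop (u,u) is the multiset
  containing u twice.\<close>

definition edge :: "'a \<Rightarrow> 'a \<Rightarrow> 'a multiset" where
  "edge u v = {#u, v#}"

text \<open>Degree: number of edge-endpoints at u (a loop contributes 2).\<close>
definition deg :: "'a multiset multiset \<Rightarrow> 'a \<Rightarrow> nat" where
  "deg E u = sum_mset (image_mset (\<lambda>e. count e u) E)"

definition graph_on :: "'a set \<Rightarrow> 'a multiset multiset \<Rightarrow> bool" where
  "graph_on V E \<longleftrightarrow> (\<forall>e \<in># E. size e = 2 \<and> set_mset e \<subseteq> V)"

definition loopy_multigraph :: "'a set \<Rightarrow> ('a \<Rightarrow> nat) \<Rightarrow> 'a multiset multiset \<Rightarrow> bool" where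
  "loopy_multigraph V k E \<longleftrightarrow> graph_on V E \<and> (\<forall>u. count E (edge u u) \<le> 1)
     \<and> (\<forall>u \<in> V. deg E u = k u)"

definition double_edge_swap :: "'a multiset multiset \<Rightarrow> 'a multiset multiset \<Rightarrow> bool" where
  "double_edge_swap E E' \<longleftrightarrow> (\<exists>u v x y.
      {#edge u v, edge x y#} \<subseteq># E \<and>
      E' = E - {#edge u v, edge x y#} + {#edge u x, edge v y#})"

definition lm_adj :: "'a set \<Rightarrow> ('a \<Rightarrow> nat) \<Rightarrow> 'a multiset multiset \<Rightarrow> 'a multiset multiset \<Rightarrow> bool" where
  "lm_adj V k G H \<longleftrightarrow> loopy_multigraph V k G \<and> loopy_multigraph V k H \<and> G \<noteq> H
     \<and> (double_edge_swap G H \<or> double_edge_swap H G)"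

end

theory Submission
  imports Defs
begin

lemma edge_eq_iff: "edge a b = edge c d \<longleftrightarrow> (a = c \<and> b = d) \<or> (a = d \<and> b = c)"
  unfolding edge_def by (auto simp: add_eq_conv_ex)

lemma edge_sym: "edge a b = edge b a"
  unfolding edge_def by auto

lemma count_edge: "count (edge a b) x = (if a = x then 1 else 0) + (if b = x then 1 else 0)"
  unfolding edge_def by auto

lemma size_edge[simp]: "size (edge a b) = 2" unfolding edge_def by simp
lemma set_edge[simp]: "set_mset (edge a b) = {a, b}" unfolding edge_def by auto

lemma deg_plus[simp]: "deg (A + B) x = deg A x + deg B x"
  unfolding deg_def by simp
lemma deg_add_mset[simp]: "deg (add_mset e M) x = count e x + deg M x"
  unfolding deg_def by simp
lemma deg_empty[simp]: "deg {#} x = 0"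
  unfolding deg_def by simp

lemma deg_diff: "A \<subseteq># M \<Longrightarrow> deg (M - A) x = deg M x - deg A x"
proof -
  assume "A \<subseteq># M"
  then have "M = A + (M - A)" by simp
  then have "deg M x = deg A x + deg (M - A) x" by (metis deg_plus)
  then show ?thesis by simp
qed

lemma deg_mono: "A \<subseteq># M \<Longrightarrow> deg A x \<le> deg M x"
  by (metis deg_plus le_add1 subset_mset.add_diff_inverse)

lemma deg_elem: "e \<in># M \<Longrightarrow> count e x \<le> deg M x"
  by (metis deg_add_mset insert_DiffM le_add1)

lemma deg_pos: "0 < deg M x \<Longrightarrow> \<exists>e. e \<in># M \<and> x \<in># e"
  by (induction M) (auto split: if_splits)

lemma size2_edge: "size e = 2 \<Longrightarrow> x \<in># e \<Longrightarrow> \<exists>y. e = edge x y"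
proof -
  assume s: "size e = 2" and x: "x \<in># e"
  have e: "e = add_mset x (e - {#x#})" using x by simp
  have "size (e - {#x#}) = Suc 0" using s x by (simp add: size_Diff_singleton)
  then obtain y where "e - {#x#} = {#y#}" by (metis One_nat_def size_1_singleton_mset)
  then show ?thesis using e unfolding edge_def by auto
qed

lemma inter_split: "(G::'b multiset) = (G \<inter># G') + (G - G')"
  by (simp add: multiset_eq_iff min_def)

lemma deg_sum: "graph_on V E \<Longrightarrow> finite V \<Longrightarrow> (\<Sum>u\<in>V. deg E u) = 2 * size E"
proof (induction E)
  case empty
  then show ?case by simp
next
  case (add e E)
  have ge: "graph_on V E" using add.prems unfolding graph_on_def by auto
  have es: "size e = 2" "set_mset e \<subseteq> V" using add.prems unfolding graph_on_def by auto
  have "(\<Sum>u\<in>V. count e u) = sum (count e) (set_mset e)"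
    by (rule sum.mono_neutral_right) (use es add.prems in \<open>auto simp: not_in_iff\<close>)
  also have "\<dots> = 2" using es size_multiset_overloaded_eq by metis
  finally have "(\<Sum>u\<in>V. count e u) = 2" .
  then show ?case using add.IH[OF ge add.prems(2)] by (simp add: sum.distrib)
qed
lemma size_eq:
  assumes "finite V" "loopy_multigraph V k G" "loopy_multigraph V k G'"
  shows "size G = size G'"
proof -
  have "2 * size G = (\<Sum>u\<in>V. deg G u)" using deg_sum assms unfolding loopy_multigraph_def by metis
  also have "\<dots> = (\<Sum>u\<in>V. deg G' u)" using assms unfolding loopy_multigraph_def by simp
  also have "\<dots> = 2 * size G'" using deg_sum assms unfolding loopy_multigraph_def by metis
  finally show ?thesis by simp
qed

lemma swap_ok:
  assumes lm: "loopy_multigraph V k G"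
    and sub: "{#edge u v, edge x y#} \<subseteq># G"
    and loops: "\<And>t. count G (edge t t) + count {#edge u x, edge v y#} (edge t t) \<le> 1"
  shows "loopy_multigraph V k (G - {#edge u v, edge x y#} + {#edge u x, edge v y#})"
proof -
  let ?A = "{#edge u v, edge x y#}" and ?B = "{#edge u x, edge v y#}"
  have go: "graph_on V G" and lp: "\<forall>t. count G (edge t t) \<le> 1" and dg: "\<forall>t\<in>V. deg G t = k t"
    using lm unfolding loopy_multigraph_def by auto
  have inG: "edge u v \<in># G" "edge x y \<in># G" by (rule mset_subset_eqD[OF sub], simp)+
  have V: "u \<in> V" "v \<in> V" "x \<in> V" "y \<in> V" using go inG unfolding graph_on_def by auto
  have "graph_on V (G - ?A + ?B)"
    unfolding graph_on_def
  proof
    fix e assume "e \<in># G - ?A + ?B"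
    then have "e \<in># G \<or> e = edge u x \<or> e = edge v y" by (auto dest: in_diffD)
    then show "size e = 2 \<and> set_mset e \<subseteq> V" using go V unfolding graph_on_def by auto
  qed
  moreover have "\<forall>t. count (G - ?A + ?B) (edge t t) \<le> 1"
  proof
    fix t
    have "count (G - ?A + ?B) (edge t t) \<le> count G (edge t t) + count ?B (edge t t)"
      by simp
    then show "count (G - ?A + ?B) (edge t t) \<le> 1" using loops[of t] by linarith
  qed
  moreover have "\<forall>t\<in>V. deg (G - ?A + ?B) t = k t"
  proof
    fix t assume "t \<in> V"
    have e: "deg ?A t = deg ?B t" by (simp add: count_edge)
    have "deg ?A t \<le> deg G t" using deg_mono[OF sub] .
    then have "deg (G - ?A + ?B) t = deg G t" using deg_diff[OF sub, of t] e by simp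
    then show "deg (G - ?A + ?B) t = k t" using dg \<open>t \<in> V\<close> by simp
  qed
  ultimately show ?thesis unfolding loopy_multigraph_def by simp
qed

lemma meas:
  assumes A: "A \<subseteq># G - G'" and c: "c \<in># B" and lt: "count G c < count G' c"
  shows "size (G - A + B - G') + size A + 1 \<le> size (G - G') + size B"
proof -
  have sub: "G - A + B - G' \<subseteq># ((G - G') - A) + (B - {#c#})"
  proof (subst subseteq_mset_def, intro allI)
    fix e
    have Ae: "count A e \<le> count G e - count G' e" using A
      by (metis count_diff mset_subset_eq_count)
    show "count (G - A + B - G') e \<le> count (G - G' - A + (B - {#c#})) e"
    proof (cases "e = c")
      case True
      have "count B c \<ge> 1" using c by (simp add: Suc_le_eq)
      then show ?thesis using True Ae lt by auto
    next
      case False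
      then show ?thesis using Ae by auto
    qed
  qed
  have "size (G - A + B - G') \<le> size ((G - G') - A) + size (B - {#c#})"
    using size_mset_mono[OF sub] by simp
  moreover have "size ((G - G') - A) = size (G - G') - size A" by (rule size_Diff_submset[OF A])
  moreover have "size A \<le> size (G - G')" using A by (simp add: size_mset_mono)
  moreover have "size (B - {#c#}) = size B - 1" "size B \<ge> 1" using c
    by (auto simp: size_Diff_singleton Suc_le_eq nonempty_has_size dest: multi_member_split)
  ultimately show ?thesis by linarith
qed
lemma exedge: "(\<forall>e\<in>#M. size e = 2) \<Longrightarrow> 0 < deg M t \<Longrightarrow> \<exists>y. edge t y \<in># M"
  using deg_pos size2_edge by metis

lemma step:
  assumes lG: "loopy_multigraph V k G" and lG': "loopy_multigraph V k G'"
    and uv: "edge u v \<in># G - G'" and uv_ne: "u \<noteq> v"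
  shows "(\<exists>H. lm_adj V k G H \<and> size (H - G') < size (G - G'))
       \<or> (\<exists>H. lm_adj V k G' H \<and> size (H - G) < size (G' - G))"
proof -
  define D where "D = G - G'"
  define D' where "D' = G' - G"
  have goG: "graph_on V G" and lpG: "\<forall>t. count G (edge t t) \<le> 1" and dgG: "\<forall>t\<in>V. deg G t = k t"
    using lG unfolding loopy_multigraph_def by auto
  have goG': "graph_on V G'" and lpG': "\<forall>t. count G' (edge t t) \<le> 1" and dgG': "\<forall>t\<in>V. deg G' t = k t"
    using lG' unfolding loopy_multigraph_def by auto
  have degeq: "deg D t = deg D' t" if "t \<in> V" for t
  proof -
    have "deg G t = deg (G \<inter># G') t + deg D t" unfolding D_def by (metis deg_plus inter_split)
    moreover have "deg G' t = deg (G \<inter># G') t + deg D' t" unfolding D'_def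
      by (metis deg_plus inter_split subset_mset.inf_commute)
    ultimately show ?thesis using dgG dgG' that by simp
  qed
  have memD: "e \<in># D \<longleftrightarrow> count G' e < count G e" for e unfolding D_def by (simp add: in_diff_count)
  have memD': "e \<in># D' \<longleftrightarrow> count G e < count G' e" for e unfolding D'_def by (simp add: in_diff_count)
  have eD: "size e = 2 \<and> set_mset e \<subseteq> V" if "e \<in># D" for e
    using that goG unfolding D_def graph_on_def by (auto dest: in_diffD)
  have eD': "size e = 2 \<and> set_mset e \<subseteq> V" if "e \<in># D'" for e
    using that goG' unfolding D'_def graph_on_def by (auto dest: in_diffD)
  have uvD: "edge u v \<in># D" using uv unfolding D_def .
  have uV: "u \<in> V" and vV: "v \<in> V" using eD[OF uvD] by auto
  have "1 \<le> deg D u" using deg_elem[OF uvD, of u] by (simp add: count_edge)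
  then have "0 < deg D' u" using degeq[OF uV] by simp
  then obtain w where uw: "edge u w \<in># D'" using exedge eD' by metis
  have wv: "w \<noteq> v" using uw uvD memD memD' by fastforce
  have wV: "w \<in> V" using eD'[OF uw] by auto
  have sub1: "{#edge u v#} \<subseteq># D" using uvD by simp
  have "0 < deg (D - {#edge u v#}) w"
  proof (cases "w = u")
    case True
    have "2 \<le> deg D' u" using deg_elem[OF uw, of u] True by (simp add: count_edge)
    then have "2 \<le> deg D u" using degeq[OF uV] by simp
    then show ?thesis using deg_diff[OF sub1, of w] True uv_ne by (simp add: count_edge)
  next
    case False
    have "1 \<le> deg D' w" using deg_elem[OF uw, of w] by (simp add: count_edge)
    then have "1 \<le> deg D w" using degeq[OF wV] by simp
    then show ?thesis using deg_diff[OF sub1, of w] False wv by (simp add: count_edge)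
  qed
  moreover have "\<forall>e\<in>#D - {#edge u v#}. size e = 2" using eD by (auto dest: in_diffD)
  ultimately obtain z where wz: "edge w z \<in># D - {#edge u v#}" using exedge by metis
  have A: "{#edge u v, edge w z#} \<subseteq># D" using uvD wz by (simp add: insert_subset_eq_iff)
  have DG: "D \<subseteq># G" unfolding D_def by simp
  have AG: "{#edge u v, edge w z#} \<subseteq># G" using A DG by (rule subset_mset.order_trans)
  show ?thesis
  proof (cases "z = v \<and> 1 \<le> count G (edge v v)")
    case False
    define H where "H = G - {#edge u v, edge w z#} + {#edge u w, edge v z#}"
    have c1: "count G (edge t t) = 0" if "edge u w = edge t t" for t
    proof -
      have "u = t" "w = t" using that by (auto simp: edge_eq_iff)
      then have "edge t t \<in># D'" using uw by simp
      then have "count G (edge t t) < count G' (edge t t)" using memD' by blast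
      moreover have "count G' (edge t t) \<le> 1" using lpG' by blast
      ultimately show ?thesis by linarith
    qed
    have c2: "count G (edge t t) = 0" if "edge v z = edge t t" for t
    proof -
      have "v = t" "z = t" using that by (auto simp: edge_eq_iff)
      then show ?thesis using False by (auto simp: not_in_iff)
    qed
    have c3: "\<not> (edge u w = edge t t \<and> edge v z = edge t t)" for t
      using uv_ne by (auto simp: edge_eq_iff)
    have loops: "count G (edge t t) + count {#edge u w, edge v z#} (edge t t) \<le> 1" for t
      using c1[of t] c2[of t] c3[of t] lpG by auto
    have lH: "loopy_multigraph V k H" unfolding H_def by (rule swap_ok[OF lG AG loops])
    have "size (H - G') + size {#edge u v, edge w z#} + 1 \<le> size (G - G') + size {#edge u w, edge v z#}"
      unfolding H_def
    proof (rule meas)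
      show "{#edge u v, edge w z#} \<subseteq># G - G'" using A unfolding D_def .
      show "edge u w \<in># {#edge u w, edge v z#}" by simp
      show "count G (edge u w) < count G' (edge u w)" using uw memD' by blast
    qed
    then have lt: "size (H - G') < size (G - G')" by simp
    then have "G \<noteq> H" by auto
    moreover have "double_edge_swap G H" unfolding double_edge_swap_def H_def using AG by blast
    ultimately have "lm_adj V k G H" using lG lH unfolding lm_adj_def by blast
    then show ?thesis using lt by blast
  next
    case True
    then have zv: "z = v" and vvG: "1 \<le> count G (edge v v)" by auto
    have "count G' (edge v v) \<le> 1" using lpG' by blast
    then have vvD': "edge v v \<notin># D'" unfolding memD' using vvG by linarith
    have "deg {#edge u v, edge w z#} v = 2" using zv uv_ne wv by (simp add: count_edge)
    then have "2 \<le> deg D v" using deg_mono[OF A, of v] by simp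
    then have "0 < deg D' v" using degeq[OF vV] by simp
    then obtain y where vy: "edge v y \<in># D'" using exedge eD' by metis
    have yv: "y \<noteq> v" using vy vvD' by auto
    have yu: "y \<noteq> u"
    proof
      assume "y = u"
      then have "edge u v \<in># D'" using vy edge_sym by metis
      then show False using uvD by (auto simp: memD memD')
    qed
    have wzD: "edge w z \<in># D" using wz by (auto dest: in_diffD)
    have yw: "y \<noteq> w"
    proof
      assume "y = w"
      then have "edge w z \<in># D'" using vy edge_sym zv by metis
      then show False using wzD by (auto simp: memD memD')
    qed
    have "edge v y \<noteq> edge u w" using uv_ne wv by (auto simp: edge_eq_iff)
    then have vy2: "edge v y \<in># D' - {#edge u w#}" using vy by (simp add: in_diff_count)
    have A': "{#edge u w, edge v y#} \<subseteq># D'" using uw vy2 by (simp add: insert_subset_eq_iff)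
    have D'G: "D' \<subseteq># G'" unfolding D'_def by simp
    have AG': "{#edge u w, edge v y#} \<subseteq># G'" using A' D'G by (rule subset_mset.order_trans)
    define H where "H = G' - {#edge u w, edge v y#} + {#edge u v, edge w y#}"
    have loops: "count G' (edge t t) + count {#edge u v, edge w y#} (edge t t) \<le> 1" for t
      using lpG' uv_ne yw by (auto simp: edge_eq_iff)
    have lH: "loopy_multigraph V k H" unfolding H_def by (rule swap_ok[OF lG' AG' loops])
    have "size (H - G) + size {#edge u w, edge v y#} + 1 \<le> size (G' - G) + size {#edge u v, edge w y#}"
      unfolding H_def
    proof (rule meas)
      show "{#edge u w, edge v y#} \<subseteq># G' - G" using A' unfolding D'_def .
      show "edge u v \<in># {#edge u v, edge w y#}" by simp
      show "count G' (edge u v) < count G (edge u v)" using uvD memD by blast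
    qed
    then have lt: "size (H - G) < size (G' - G)" by simp
    then have "G' \<noteq> H" by auto
    moreover have "double_edge_swap G' H" unfolding double_edge_swap_def H_def using AG' by blast
    ultimately have "lm_adj V k G' H" using lG' lH unfolding lm_adj_def by blast
    then show ?thesis using lt by blast
  qed
qed
lemma degeq:
  assumes lG: "loopy_multigraph V k G" and lG': "loopy_multigraph V k G'" and t: "t \<in> V"
  shows "deg (G - G') t = deg (G' - G) t"
proof -
  have "deg G t = deg (G \<inter># G') t + deg (G - G') t" by (metis deg_plus inter_split)
  moreover have "deg G' t = deg (G \<inter># G') t + deg (G' - G) t"
    by (metis deg_plus inter_split subset_mset.inf_commute)
  ultimately show ?thesis using lG lG' t unfolding loopy_multigraph_def by simp
qed

lemma size_diff_sym:
  fixes G G' :: "'b multiset"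
  assumes "size G = size G'" shows "size (G - G') = size (G' - G)"
proof -
  have "size (G - G') = size G - size (G \<inter># G')" by (rule size_Diff_subset_Int)
  also have "\<dots> = size G' - size (G' \<inter># G)" by (metis assms subset_mset.inf_commute)
  also have "\<dots> = size (G' - G)" by (rule size_Diff_subset_Int[symmetric])
  finally show ?thesis .
qed

lemma lm_adj_sym: "lm_adj V k G H \<Longrightarrow> lm_adj V k H G"
  unfolding lm_adj_def by auto

lemma rtc_sym: "(lm_adj V k)\<^sup>*\<^sup>* G H \<Longrightarrow> (lm_adj V k)\<^sup>*\<^sup>* H G"
proof (induction rule: rtranclp_induct)
  case base
  then show ?case by simp
next
  case (step y z)
  then show ?case using lm_adj_sym converse_rtranclp_into_rtranclp by metis
qed

lemma nonloop:
  assumes lG: "loopy_multigraph V k G" and lG': "loopy_multigraph V k G'" and ne: "G - G' \<noteq> {#}"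
  shows "\<exists>u v. u \<noteq> v \<and> (edge u v \<in># G - G' \<or> edge u v \<in># G' - G)"
proof -
  have goG: "graph_on V G" and goG': "graph_on V G'" and lpG: "\<forall>t. count G (edge t t) \<le> 1"
    and lpG': "\<forall>t. count G' (edge t t) \<le> 1"
    using lG lG' unfolding loopy_multigraph_def by auto
  have eD: "size e = 2 \<and> set_mset e \<subseteq> V" if "e \<in># G - G'" for e
    using that goG unfolding graph_on_def by (auto dest: in_diffD)
  have eD': "size e = 2 \<and> set_mset e \<subseteq> V" if "e \<in># G' - G" for e
    using that goG' unfolding graph_on_def by (auto dest: in_diffD)
  obtain e where e: "e \<in># G - G'" using ne by blast
  then have "size e = 2" using eD by blast
  moreover have "e \<noteq> {#}" using \<open>size e = 2\<close> by auto
  then obtain a where "a \<in># e" by blast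
  ultimately obtain b where eab: "e = edge a b" using size2_edge by metis
  show ?thesis
  proof (cases "a = b")
    case False
    then show ?thesis using e eab by blast
  next
    case True
    have aa: "edge a a \<in># G - G'" using e eab True by simp
    have aV: "a \<in> V" using eD[OF aa] by simp
    have "2 \<le> deg (G - G') a" using deg_elem[OF aa, of a] by (simp add: count_edge)
    then have "0 < deg (G' - G) a" using degeq[OF lG lG' aV] by simp
    then obtain c where ac: "edge a c \<in># G' - G" using exedge eD' by metis
    have "c \<noteq> a"
    proof
      assume "c = a"
      then have "edge a a \<in># G' - G" using ac by simp
      then show False using aa by (simp add: in_diff_count)
    qed
    then show ?thesis using ac by metis
  qed
qed

lemma main:
  assumes fin: "finite V"
  shows "\<forall>G G'. size (G - G') = n \<longrightarrow> loopy_multigraph V k G \<longrightarrow> loopy_multigraph V k G'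
           \<longrightarrow> (lm_adj V k)\<^sup>*\<^sup>* G G'"
proof (induction n rule: less_induct)
  case (less n)
  show ?case
  proof (intro allI impI)
    fix G G' assume n: "size (G - G') = n" and lG: "loopy_multigraph V k G"
      and lG': "loopy_multigraph V k G'"
    have sz: "size G = size G'" using size_eq[OF fin lG lG'] .
    show "(lm_adj V k)\<^sup>*\<^sup>* G G'"
    proof (cases "G = G'")
      case True
      then show ?thesis by simp
    next
      case False
      have ne: "G - G' \<noteq> {#}"
      proof
        assume "G - G' = {#}"
        then have "G \<subseteq># G'" by (simp add: Diff_eq_empty_iff_mset)
        then show False using False sz
          by (metis mset_subset_size subset_mset.le_imp_less_or_eq less_irrefl)
      qed
      have disj: "(\<exists>H. lm_adj V k G H \<and> size (H - G') < size (G - G'))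
             \<or> (\<exists>H. lm_adj V k G' H \<and> size (H - G) < size (G' - G))"
      proof -
        obtain u v where uv: "u \<noteq> v" "edge u v \<in># G - G' \<or> edge u v \<in># G' - G"
          using nonloop[OF lG lG' ne] by blast
        then show ?thesis using step[OF lG lG' _ uv(1)] step[OF lG' lG _ uv(1)] by blast
      qed
      then show ?thesis
      proof
        assume "\<exists>H. lm_adj V k G H \<and> size (H - G') < size (G - G')"
        then obtain H where a: "lm_adj V k G H" and s: "size (H - G') < n" using n by blast
        have lH: "loopy_multigraph V k H" using a unfolding lm_adj_def by blast
        have "(lm_adj V k)\<^sup>*\<^sup>* H G'" using less.IH[OF s] lH lG' by blast
        then show ?thesis using a converse_rtranclp_into_rtranclp[of "lm_adj V k" G H G'] by blast
      next
        assume "\<exists>H. lm_adj V k G' H \<and> size (H - G) < size (G' - G)"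
        then obtain H where a: "lm_adj V k G' H" and s0: "size (H - G) < size (G' - G)" by blast
        have lH: "loopy_multigraph V k H" using a unfolding lm_adj_def by blast
        have "size (G - H) = size (H - G)" using size_diff_sym size_eq[OF fin lG lH] by metis
        moreover have "size (G' - G) = n" using n size_diff_sym[OF sz] by simp
        ultimately have s: "size (G - H) < n" using s0 by simp
        have "(lm_adj V k)\<^sup>*\<^sup>* G H" using less.IH[OF s] lG lH by blast
        then show ?thesis using lm_adj_sym[OF a] by (rule rtranclp.rtrancl_into_rtrancl)
      qed
    qed
  qed
qed

theorem theorem1:
  fixes V :: "'a set" and k :: "'a \<Rightarrow> nat" and G G' :: "'a multiset multiset"
  assumes "finite V"
    and "\<forall>u \<in> V. k u \<ge> 1"
    and "loopy_multigraph V k G"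
    and "loopy_multigraph V k G'"
  shows "(lm_adj V k)\<^sup>*\<^sup>* G G'"
  using main[OF assms(1)] assms(3,4) by blast

end
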